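(* Let $D$ be a chain BN on $\{0,1\}^n$ with all conditional probabilities in $(0,1)$, and let $f(x)=\prod_{i\in T_1}x_i\prod_{j\in T_0}(1-x_j)$ where $T_0,T_1\subseteq[n]$ are disjoint and $T=T_0\cup T_1$ has $d\ge1$ elements. Let $S\subseteq[n]$ and write $0=t_0<t_1<\dots<t_d$ for the elements of $T\cup\{0\}$. If $\max S>t_d$ then $\hat f_S=0$. Otherwise, with $A_i,D'_{r,a},A'_{r,a}$ defined (relative to $S,T_0,T_1$) as in the context, and with $h_i=\min(S\cap(t_{i-1},t_i))$ if $S\cap(t_{i-1},t_i)\neq\emptyset$ and $h_i=t_i$ otherwise ($i=1,\dots,d$), $y_0=0$ and $y_i=1$ if $t_i\in T_1$, $y_i=0$ if $t_i\in T_0$, $$\hat f_S=\prod_{i=1}^d D'_{h_i+1,\,t_i}\;A'_{t_{i-1}+1,\,h_i}(y_{i-1}).$$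
   Context: A chain BN on $X_1,\dots,X_n$ is a Bayesian network with $\operatorname{pa}(1)=\emptyset$ and $\operatorname{pa}(i)=\{i-1\}$ for $2\le i\le n$. For $b\in\{0,1\}$ write $\mu_{i,b}=P(X_i=1\mid X_{i-1}=b)$ and $\sigma_{i,b}=\sqrt{\mu_{i,b}(1-\mu_{i,b})}$ for $i\ge2$, and set $\mu_{1,0}=\mu_{1,1}=P(X_1=1)$, $\sigma_{1,0}=\sigma_{1,1}=\sqrt{\mu_{1,0}(1-\mu_{1,0})}$. The BN-induced basis is $\phi_i(x)=(x_i-\mu_{i,x_{i-1}})/\sigma_{i,x_{i-1}}$ (for $i=1$, $(x_1-\mu_{1,0})/\sigma_{1,0}$), $\phi_S=\prod_{i\in S}\phi_i$, and $\hat f_S=\mathbb{E}_D[f(X)\phi_S(X)]$. Given $S,T_0,T_1$ with $T=T_0\cup T_1$, for $i\in[n]$ and $b\in\{0,1\}$ define $A_i(b)=\mu_{i,b}$ if $i\in T_1\setminus S$ or $i\notin S\cup T$; $A_i(b)=1-\mu_{i,b}$ if $i\in T_0\setminus S$; $A_i(b)=\sigma_{i,b}$ if $i\in S\cap T_1$ or $i\in S\setminus T$; $A_i(b)=-\sigma_{i,b}$ if $i\in S\cap T_0$. Let $D_i=A_i(1)-A_i(0)$. For integers $r,a$ let $D'_{r,a}=\prod_{\ell=r}^{a}D_\ell$ (equal to $1$ if $r>a$), $A'_{r,a}(0)=\sum_{\ell=r}^{a}D'_{\ell+1,a}A_\ell(0)$ (equal to $0$ if $r>a$), and $A'_{r,a}(1)=A'_{r,a}(0)+D'_{r,a}$.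 *)

theory Defs
  imports Complex_Main
begin

text \<open>Parameters: p1 = P(X_1 = 1) and mu i b = P(X_i = 1 | X_{i-1} = b) for i >= 2.
  Assignments are functions x :: nat => bool that are False outside {1..n};
  in particular x 0 = False, which is harmless since cmu 1 b ignores b.\<close>

definition cmu :: "real \<Rightarrow> (nat \<Rightarrow> bool \<Rightarrow> real) \<Rightarrow> nat \<Rightarrow> bool \<Rightarrow> real" where
  "cmu p1 mu i b = (if i = 1 then p1 else mu i b)"

definition csig :: "real \<Rightarrow> (nat \<Rightarrow> bool \<Rightarrow> real) \<Rightarrow> nat \<Rightarrow> bool \<Rightarrow> real" where
  "csig p1 mu i b = sqrt (cmu p1 mu i b * (1 - cmu p1 mu i b))"

definition cube :: "nat \<Rightarrow> (nat \<Rightarrow> bool) set" where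
  "cube n = {x. \<forall>i. x i \<longrightarrow> i \<in> {1..n}}"

definition chain_prob :: "nat \<Rightarrow> real \<Rightarrow> (nat \<Rightarrow> bool \<Rightarrow> real) \<Rightarrow> (nat \<Rightarrow> bool) \<Rightarrow> real" where
  "chain_prob n p1 mu x =
     (\<Prod>i\<in>{1..n}. if x i then cmu p1 mu i (x (i - 1)) else 1 - cmu p1 mu i (x (i - 1)))"

definition bn_phi :: "real \<Rightarrow> (nat \<Rightarrow> bool \<Rightarrow> real) \<Rightarrow> nat \<Rightarrow> (nat \<Rightarrow> bool) \<Rightarrow> real" where
  "bn_phi p1 mu i x = (of_bool (x i) - cmu p1 mu i (x (i - 1))) / csig p1 mu i (x (i - 1))"

definition fourier_coeff ::
  "nat \<Rightarrow> real \<Rightarrow> (nat \<Rightarrow> bool \<Rightarrow> real) \<Rightarrow> ((nat \<Rightarrow> bool) \<Rightarrow> real) \<Rightarrow> nat set \<Rightarrow> real" where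
  "fourier_coeff n p1 mu f S =
     (\<Sum>x\<in>cube n. chain_prob n p1 mu x * f x * (\<Prod>i\<in>S. bn_phi p1 mu i x))"

definition conj_fun :: "nat set \<Rightarrow> nat set \<Rightarrow> (nat \<Rightarrow> bool) \<Rightarrow> real" where
  "conj_fun T0 T1 x = (\<Prod>i\<in>T1. of_bool (x i)) * (\<Prod>j\<in>T0. 1 - of_bool (x j))"

definition Acoef :: "real \<Rightarrow> (nat \<Rightarrow> bool \<Rightarrow> real) \<Rightarrow> nat set \<Rightarrow> nat set \<Rightarrow> nat set \<Rightarrow> nat \<Rightarrow> bool \<Rightarrow> real" where
  "Acoef p1 mu S T0 T1 i b =
     (if i \<in> S then (if i \<in> T0 then - csig p1 mu i b else csig p1 mu i b)
      else (if i \<in> T0 then 1 - cmu p1 mu i b else cmu p1 mu i b))"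

definition Dcoef :: "real \<Rightarrow> (nat \<Rightarrow> bool \<Rightarrow> real) \<Rightarrow> nat set \<Rightarrow> nat set \<Rightarrow> nat set \<Rightarrow> nat \<Rightarrow> real" where
  "Dcoef p1 mu S T0 T1 i = Acoef p1 mu S T0 T1 i True - Acoef p1 mu S T0 T1 i False"

definition Dprime :: "real \<Rightarrow> (nat \<Rightarrow> bool \<Rightarrow> real) \<Rightarrow> nat set \<Rightarrow> nat set \<Rightarrow> nat set \<Rightarrow> nat \<Rightarrow> nat \<Rightarrow> real" where
  "Dprime p1 mu S T0 T1 r a = (\<Prod>l\<in>{r..a}. Dcoef p1 mu S T0 T1 l)"

definition Aprime :: "real \<Rightarrow> (nat \<Rightarrow> bool \<Rightarrow> real) \<Rightarrow> nat set \<Rightarrow> nat set \<Rightarrow> nat set \<Rightarrow> nat \<Rightarrow> nat \<Rightarrow> bool \<Rightarrow> real" where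
  "Aprime p1 mu S T0 T1 r a b =
     (\<Sum>l\<in>{r..a}. Dprime p1 mu S T0 T1 (l + 1) a * Acoef p1 mu S T0 T1 l False)
     + (if b then Dprime p1 mu S T0 T1 r a else 0)"

definition tseq :: "nat set \<Rightarrow> nat \<Rightarrow> nat" where
  "tseq T i = sorted_list_of_set (insert 0 T) ! i"

definition hseq :: "nat set \<Rightarrow> nat set \<Rightarrow> nat \<Rightarrow> nat" where
  "hseq S T i = (if S \<inter> {tseq T (i - 1)<..<tseq T i} \<noteq> {}
                 then Min (S \<inter> {tseq T (i - 1)<..<tseq T i}) else tseq T i)"

definition yseq :: "nat set \<Rightarrow> nat set \<Rightarrow> nat \<Rightarrow> bool" where
  "yseq T T1 i = (tseq T i \<in> T1)"

end

theory Submission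
  imports Defs
begin


lemma cube_0: "cube 0 = {\<lambda>_. False}"
  by (auto simp: cube_def fun_eq_iff)

lemma cube_Suc: "cube (Suc m) = cube m \<union> (\<lambda>x. x(Suc m := True)) ` cube m"
proof
  show "cube (Suc m) \<subseteq> cube m \<union> (\<lambda>x. x(Suc m := True)) ` cube m"
  proof
    fix x assume x: "x \<in> cube (Suc m)"
    show "x \<in> cube m \<union> (\<lambda>x. x(Suc m := True)) ` cube m"
    proof (cases "x (Suc m)")
      case True
      have "x(Suc m := False) \<in> cube m" using x by (auto simp: cube_def le_Suc_eq)
      moreover have "x = (x(Suc m := False))(Suc m := True)" using True by (simp add: fun_upd_idem)
      ultimately show ?thesis by blast
    next
      case False
      then have "x \<in> cube m" using x by (auto simp: cube_def le_Suc_eq)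
      then show ?thesis by blast
    qed
  qed
qed (auto simp: cube_def split: if_splits)

lemma cube_notSuc: "x \<in> cube m \<Longrightarrow> x (Suc m) = False"
  by (auto simp: cube_def)

lemma cube_zero: "x \<in> cube m \<Longrightarrow> x 0 = False"
  by (auto simp: cube_def)

lemma finite_cube: "finite (cube m)"
  by (induction m) (simp_all add: cube_0 cube_Suc)

lemma sum_cube_Suc:
  "(\<Sum>x\<in>cube (Suc m). H x) = (\<Sum>x\<in>cube m. H x + H (x(Suc m := True)))"
proof -
  have inj: "inj_on (\<lambda>x. x(Suc m := True)) (cube m)"
  proof (rule inj_onI)
    fix x y assume xy: "x \<in> cube m" "y \<in> cube m" and eq: "x(Suc m := True) = y(Suc m := True)"
    show "x = y"
    proof
      fix i show "x i = y i" using fun_cong[OF eq, of i] cube_notSuc[OF xy(1)] cube_notSuc[OF xy(2)]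
        by (cases "i = Suc m") auto
    qed
  qed
  have disj: "cube m \<inter> (\<lambda>x. x(Suc m := True)) ` cube m = {}"
    using cube_notSuc by fastforce
  have "(\<Sum>x\<in>cube (Suc m). H x) = (\<Sum>x\<in>cube m. H x) + (\<Sum>x\<in>(\<lambda>x. x(Suc m := True)) ` cube m. H x)"
    unfolding cube_Suc by (rule sum.union_disjoint) (use finite_cube disj in auto)
  also have "(\<Sum>x\<in>(\<lambda>x. x(Suc m := True)) ` cube m. H x) = (\<Sum>x\<in>cube m. H (x(Suc m := True)))"
    by (rule sum.reindex[OF inj, unfolded comp_def])
  finally show ?thesis by (simp add: sum.distrib)
qed

locale chainbn =
  fixes n :: nat and p1 :: real and mu :: "nat \<Rightarrow> bool \<Rightarrow> real" and S T0 T1 :: "nat set"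
  assumes p1: "0 < p1" "p1 < 1"
    and mu: "\<And>i b. i \<in> {2..n} \<Longrightarrow> 0 < mu i b \<and> mu i b < 1"
    and T0: "T0 \<subseteq> {1..n}" and T1: "T1 \<subseteq> {1..n}" and disj: "T0 \<inter> T1 = {}"
    and S: "S \<subseteq> {1..n}"
begin

abbreviation "cm \<equiv> cmu p1 mu"
abbreviation "cs \<equiv> csig p1 mu"
abbreviation "Ac \<equiv> Acoef p1 mu S T0 T1"
abbreviation "Dc \<equiv> Dcoef p1 mu S T0 T1"
abbreviation "Dp \<equiv> Dprime p1 mu S T0 T1"
abbreviation "Ap \<equiv> Aprime p1 mu S T0 T1"

definition g :: "nat \<Rightarrow> bool \<Rightarrow> bool \<Rightarrow> real" where
  "g i b c = (if c then cm i b else 1 - cm i b) * (if i \<in> T1 then of_bool c else 1)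
     * (if i \<in> T0 then 1 - of_bool c else 1)
     * (if i \<in> S then (of_bool c - cm i b) / cs i b else 1)"

definition G :: "nat \<Rightarrow> (bool \<Rightarrow> real) \<Rightarrow> real" where
  "G m h = (\<Sum>x\<in>cube m. (\<Prod>i\<in>{1..m}. g i (x (i - 1)) (x i)) * h (x m))"

definition M where "M m = G m (\<lambda>_. 1)"
definition P where "P m = G m (\<lambda>b. of_bool b)"

lemma cm_pos: "i \<in> {1..n} \<Longrightarrow> 0 < cm i b \<and> cm i b < 1"
  unfolding cmu_def using p1 mu[of i b] by auto

lemma cs_facts:
  assumes "i \<in> {1..n}"
  shows "cm i b * (1 - cm i b) / cs i b = cs i b" "(1 - cm i b) * (0 - cm i b) / cs i b = - cs i b"
proof -
  have "0 \<le> cm i b * (1 - cm i b)" using cm_pos[OF assms, of b] by simp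
  then show 1: "cm i b * (1 - cm i b) / cs i b = cs i b"
    unfolding csig_def by (rule real_div_sqrt)
  have e: "(1 - cm i b) * (0 - cm i b) = - (cm i b * (1 - cm i b))"
    by (simp add: algebra_simps)
  have "(1 - cm i b) * (0 - cm i b) / cs i b = - (cm i b * (1 - cm i b) / cs i b)"
    unfolding e by (rule minus_divide_left[symmetric])
  then show "(1 - cm i b) * (0 - cm i b) / cs i b = - cs i b" using 1 by simp
qed

lemma g_T: "i \<in> {1..n} \<Longrightarrow> g i b True = (if i \<in> T0 then 0 else Ac i b)"
  using cs_facts[of i b] disj by (auto simp: g_def Acoef_def)

lemma g_F: "i \<in> {1..n} \<Longrightarrow> g i b False =
   (if i \<in> T1 then 0 else if i \<in> T0 then Ac i b else (if i \<in> S then 0 else 1) - Ac i b)"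
  using cs_facts[of i b] disj by (auto simp: g_def Acoef_def)

lemma G_0: "G 0 h = h False"
  by (simp add: G_def cube_0)

lemma G_Suc: "G (Suc m) h = G m (\<lambda>b. g (Suc m) b False * h False + g (Suc m) b True * h True)"
  unfolding G_def sum_cube_Suc
proof (rule sum.cong[OF refl])
  fix x assume x: "x \<in> cube m"
  have xs: "x (Suc m) = False" using cube_notSuc[OF x] .
  have pr: "(\<Prod>i\<in>{1..m}. g i ((x(Suc m := c)) (i - 1)) ((x(Suc m := c)) i))
      = (\<Prod>i\<in>{1..m}. g i (x (i - 1)) (x i))" for c
    by (rule prod.cong) auto
  have "(\<Prod>i\<in>{1..Suc m}. g i ((x(Suc m := c)) (i - 1)) ((x(Suc m := c)) i))
     = g (Suc m) (x m) c * (\<Prod>i\<in>{1..m}. g i (x (i - 1)) (x i))" for c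
  proof -
    have "(\<Prod>i\<in>{1..Suc m}. g i ((x(Suc m := c)) (i - 1)) ((x(Suc m := c)) i))
      = g (Suc m) ((x(Suc m := c)) (Suc m - 1)) ((x(Suc m := c)) (Suc m)) * (\<Prod>i\<in>{1..m}. g i ((x(Suc m := c)) (i - 1)) ((x(Suc m := c)) i))"
      by (rule prod.nat_ivl_Suc') simp
    then show ?thesis by (simp only: pr) simp
  qed
  from this[of True] this[of False] xs
  show "(\<Prod>i\<in>{1..Suc m}. g i (x (i - 1)) (x i)) * h (x (Suc m)) +
          (\<Prod>i\<in>{1..Suc m}. g i ((x(Suc m := True)) (i - 1)) ((x(Suc m := True)) i)) * h ((x(Suc m := True)) (Suc m)) =
          (\<Prod>i\<in>{1..m}. g i (x (i - 1)) (x i)) * (g (Suc m) (x m) False * h False + g (Suc m) (x m) True * h True)"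
    by (simp add: fun_upd_idem algebra_simps)
qed

lemma G_lin: "G m h = M m * h False + P m * (h True - h False)"
proof -
  have "G m h = (\<Sum>x\<in>cube m. (\<Prod>i\<in>{1..m}. g i (x (i - 1)) (x i)) * h False
      + (\<Prod>i\<in>{1..m}. g i (x (i - 1)) (x i)) * of_bool (x m) * (h True - h False))"
    unfolding G_def by (rule sum.cong) (auto simp: algebra_simps)
  then show ?thesis
    by (simp add: M_def P_def G_def sum.distrib sum_distrib_right)
qed

lemma M_Suc: "M (Suc m) = M m * (g (Suc m) False False + g (Suc m) False True)
   + P m * ((g (Suc m) True False + g (Suc m) True True) - (g (Suc m) False False + g (Suc m) False True))"
  unfolding M_def[of "Suc m"] G_Suc by (simp add: G_lin)

lemma P_Suc: "P (Suc m) = M m * g (Suc m) False True + P m * (g (Suc m) True True - g (Suc m) False True)"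
  unfolding P_def[of "Suc m"] G_Suc by (simp add: G_lin)

lemma M0: "M 0 = 1" and P0: "P 0 = 0"
  by (simp_all add: M_def P_def G_0)


lemma step_free: assumes "i \<in> {1..n}" "i \<notin> T0" "i \<notin> T1" "i \<notin> S"
  shows "M i = M (i - 1) \<and> P i = M (i - 1) * Ac i False + P (i - 1) * Dc i"
proof -
  obtain m where i: "i = Suc m" using assms(1) by (cases i) auto
  show ?thesis using M_Suc[of m] P_Suc[of m] g_T[OF assms(1)] g_F[OF assms(1)] assms
    unfolding i by (simp add: Dcoef_def algebra_simps)
qed

lemma step_S: assumes "i \<in> {1..n}" "i \<notin> T0" "i \<notin> T1" "i \<in> S"
  shows "M i = 0 \<and> P i = M (i - 1) * Ac i False + P (i - 1) * Dc i"
proof -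
  obtain m where i: "i = Suc m" using assms(1) by (cases i) auto
  show ?thesis using M_Suc[of m] P_Suc[of m] g_T[OF assms(1)] g_F[OF assms(1)] assms
    unfolding i by (simp add: Dcoef_def algebra_simps)
qed

lemma step_T0: assumes "i \<in> {1..n}" "i \<in> T0"
  shows "M i = M (i - 1) * Ac i False + P (i - 1) * Dc i \<and> P i = 0"
proof -
  obtain m where i: "i = Suc m" using assms(1) by (cases i) auto
  have "i \<notin> T1" using assms disj by auto
  then show ?thesis using M_Suc[of m] P_Suc[of m] g_T[OF assms(1)] g_F[OF assms(1)] assms
    unfolding i by (simp add: Dcoef_def algebra_simps)
qed

lemma step_T1: assumes "i \<in> {1..n}" "i \<in> T1"
  shows "M i = M (i - 1) * Ac i False + P (i - 1) * Dc i \<and> P i = M i"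
proof -
  obtain m where i: "i = Suc m" using assms(1) by (cases i) auto
  have "i \<notin> T0" using assms disj by auto
  then show ?thesis using M_Suc[of m] P_Suc[of m] g_T[OF assms(1)] g_F[OF assms(1)] assms
    unfolding i by (simp add: Dcoef_def algebra_simps)
qed

lemma step_T: assumes "i \<in> {1..n}" "i \<in> T0 \<union> T1"
  shows "M i = M (i - 1) * Ac i False + P (i - 1) * Dc i \<and> P i = (if i \<in> T1 then M i else 0)"
  using step_T0[OF assms(1)] step_T1[OF assms(1)] assms(2) disj by auto

end



context chainbn
begin

lemma Dp_Suc: "r \<le> Suc a \<Longrightarrow> Dp r (Suc a) = Dp r a * Dc (Suc a)"
  unfolding Dprime_def by (subst prod.nat_ivl_Suc') (simp_all add: mult.commute)

lemma Dp_empty: "a < r \<Longrightarrow> Dp r a = 1"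
  unfolding Dprime_def by simp

lemma Ap0_empty: "a < r \<Longrightarrow> Ap r a False = 0"
  unfolding Aprime_def by simp

lemma Ap_split: "Ap r a b = Ap r a False + (if b then Dp r a else 0)"
  unfolding Aprime_def by simp

lemma Ap0_Suc: assumes "r \<le> Suc a"
  shows "Ap r (Suc a) False = Ap r a False * Dc (Suc a) + Ac (Suc a) False"
proof -
  have "Ap r (Suc a) False = (\<Sum>l\<in>{r..Suc a}. Dp (l + 1) (Suc a) * Ac l False)"
    unfolding Aprime_def by simp
  also have "\<dots> = Dp (Suc a + 1) (Suc a) * Ac (Suc a) False + (\<Sum>l\<in>{r..a}. Dp (l + 1) (Suc a) * Ac l False)"
    by (rule sum.nat_ivl_Suc'[OF assms])
  also have "(\<Sum>l\<in>{r..a}. Dp (l + 1) (Suc a) * Ac l False) = (\<Sum>l\<in>{r..a}. Dp (l + 1) a * Ac l False) * Dc (Suc a)"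
    unfolding sum_distrib_right by (rule sum.cong) (auto simp: Dp_Suc)
  finally show ?thesis by (simp add: Dp_empty Aprime_def)
qed

lemma seg_free:
  "1 \<le> r \<Longrightarrow> r \<le> a + 1 \<Longrightarrow> a \<le> n \<Longrightarrow> (\<forall>j. r \<le> j \<and> j \<le> a \<longrightarrow> j \<notin> S \<and> j \<notin> T0 \<and> j \<notin> T1) \<Longrightarrow>
   M a = M (r - 1) \<and> P a = M (r - 1) * Ap r a False + P (r - 1) * Dp r a"
proof (induction a)
  case 0
  then have "r = 1" by simp
  then show ?case by (simp add: Dp_empty Ap0_empty)
next
  case (Suc a)
  show ?case
  proof (cases "r = Suc a + 1")
    case True
    then show ?thesis by (simp add: Dp_empty Ap0_empty)
  next
    case False
    then have r: "r \<le> Suc a" using Suc.prems by simp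
    have IH: "M a = M (r - 1) \<and> P a = M (r - 1) * Ap r a False + P (r - 1) * Dp r a"
      using Suc.IH Suc.prems r by simp
    have st: "M (Suc a) = M a \<and> P (Suc a) = M a * Ac (Suc a) False + P a * Dc (Suc a)"
      using step_free[of "Suc a"] Suc.prems r by simp
    show ?thesis using IH st r by (simp add: Dp_Suc Ap0_Suc algebra_simps)
  qed
qed

lemma seg_zero:
  "h \<le> a \<Longrightarrow> a \<le> n \<Longrightarrow> (\<forall>j. h < j \<and> j \<le> a \<longrightarrow> j \<notin> T0 \<and> j \<notin> T1) \<Longrightarrow> M h = 0 \<Longrightarrow>
   M a = 0 \<and> P a = P h * Dp (h + 1) a"
proof (induction a)
  case 0
  then show ?case by (simp add: Dp_empty)
next
  case (Suc a)
  show ?case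
  proof (cases "h = Suc a")
    case True
    then show ?thesis using Suc.prems by (simp add: Dp_empty)
  next
    case False
    then have h: "h \<le> a" using Suc.prems by simp
    have IH: "M a = 0 \<and> P a = P h * Dp (h + 1) a"
      using Suc.IH Suc.prems h by simp
    have st: "P (Suc a) = M a * Ac (Suc a) False + P a * Dc (Suc a) \<and> (M (Suc a) = M a \<or> M (Suc a) = 0)"
      using step_free[of "Suc a"] step_S[of "Suc a"] Suc.prems h by (cases "Suc a \<in> S") auto
    show ?thesis using IH st h by (auto simp: Dp_Suc)
  qed
qed

lemma seg_keep:
  "a \<le> b \<Longrightarrow> b \<le> n \<Longrightarrow> (\<forall>j. a < j \<and> j \<le> b \<longrightarrow> j \<notin> T0 \<and> j \<notin> T1 \<and> j \<notin> S) \<Longrightarrow> M b = M a"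
proof (induction b)
  case 0
  then show ?case by simp
next
  case (Suc b)
  show ?case
  proof (cases "a = Suc b")
    case False
    then have "a \<le> b" using Suc.prems by simp
    then show ?thesis using Suc.IH Suc.prems step_free[of "Suc b"] by simp
  qed simp
qed

lemma block:
  assumes tp: "tp < t" and tn: "t \<le> n" and tT: "t \<in> T0 \<union> T1"
    and noT: "\<forall>j. tp < j \<and> j < t \<longrightarrow> j \<notin> T0 \<and> j \<notin> T1"
    and Ptp: "P tp = (if y then M tp else 0)"
    and hh: "(h = t \<and> (\<forall>j. tp < j \<and> j < t \<longrightarrow> j \<notin> S)) \<or> (h \<in> S \<and> tp < h \<and> h < t \<and> (\<forall>j. tp < j \<and> j < h \<longrightarrow> j \<notin> S))"
  shows "M t = M tp * (Dp (h + 1) t * Ap (tp + 1) h y) \<and> P t = (if t \<in> T1 then M t else 0)"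
proof -
  have t1: "t \<in> {1..n}" using tp tn by auto
  have stT: "M t = M (t - 1) * Ac t False + P (t - 1) * Dc t" "P t = (if t \<in> T1 then M t else 0)"
    using step_T[OF t1 tT] by auto
  from hh show ?thesis
  proof
    assume h: "h = t \<and> (\<forall>j. tp < j \<and> j < t \<longrightarrow> j \<notin> S)"
    have sf: "M (t - 1) = M tp \<and> P (t - 1) = M tp * Ap (tp + 1) (t - 1) False + P tp * Dp (tp + 1) (t - 1)"
    proof -
      have "\<forall>j. tp + 1 \<le> j \<and> j \<le> t - 1 \<longrightarrow> j \<notin> S \<and> j \<notin> T0 \<and> j \<notin> T1" using h noT by auto
      then show ?thesis using seg_free[of "tp + 1" "t - 1"] tp tn by simp
    qed
    have ts: "t = Suc (t - 1)" using tp by simp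
    have "Ap (tp + 1) t y = Ap (tp + 1) (t - 1) False * Dc t + Ac t False + (if y then Dp (tp + 1) (t - 1) * Dc t else 0)"
      using Ap_split[of "tp + 1" t y] Ap0_Suc[of "tp + 1" "t - 1"] Dp_Suc[of "tp + 1" "t - 1"] tp ts
      by simp
    then show ?thesis using sf stT h Ptp by (auto simp: Dp_empty algebra_simps)
  next
    assume h: "h \<in> S \<and> tp < h \<and> h < t \<and> (\<forall>j. tp < j \<and> j < h \<longrightarrow> j \<notin> S)"
    have sf: "M (h - 1) = M tp \<and> P (h - 1) = M tp * Ap (tp + 1) (h - 1) False + P tp * Dp (tp + 1) (h - 1)"
    proof -
      have "\<forall>j. tp + 1 \<le> j \<and> j \<le> h - 1 \<longrightarrow> j \<notin> S \<and> j \<notin> T0 \<and> j \<notin> T1" using h noT by auto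
      then show ?thesis using seg_free[of "tp + 1" "h - 1"] h tn by force
    qed
    have h1: "h \<in> {1..n}" using h tn by auto
    have sh: "M h = 0" "P h = M (h - 1) * Ac h False + P (h - 1) * Dc h"
      using step_S[OF h1] h noT by auto
    have hs: "h = Suc (h - 1)" using h by simp
    have Aph: "Ap (tp + 1) h y = Ap (tp + 1) (h - 1) False * Dc h + Ac h False + (if y then Dp (tp + 1) (h - 1) * Dc h else 0)"
      using Ap_split[of "tp + 1" h y] Ap0_Suc[of "tp + 1" "h - 1"] Dp_Suc[of "tp + 1" "h - 1"] h hs
      by simp
    have Ph: "P h = M tp * Ap (tp + 1) h y"
      using sh(2) sf Aph Ptp by (auto simp: algebra_simps)
    have sz: "M (t - 1) = 0 \<and> P (t - 1) = P h * Dp (h + 1) (t - 1)"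
    proof -
      have "\<forall>j. h < j \<and> j \<le> t - 1 \<longrightarrow> j \<notin> T0 \<and> j \<notin> T1" using h noT by auto
      then show ?thesis using seg_zero[of h "t - 1"] h tn sh(1) by force
    qed
    have "Dp (h + 1) t = Dp (h + 1) (t - 1) * Dc t"
      using Dp_Suc[of "h + 1" "t - 1"] h by (simp add: Suc_diff_1[symmetric])
    then show ?thesis using stT sz Ph by (simp add: algebra_simps)
  qed
qed

end



context chainbn
begin

lemma restrict_prod: "A \<subseteq> {1..n} \<Longrightarrow> (\<Prod>i\<in>A. f i) = (\<Prod>i\<in>{1..n}. if i \<in> A then f i else (1::real))"
proof -
  assume A: "A \<subseteq> {1..n}"
  then have "A = {1..n} \<inter> A" by auto
  then have "(\<Prod>i\<in>A. f i) = (\<Prod>i\<in>{1..n} \<inter> A. f i)" by simp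
  also have "\<dots> = (\<Prod>i\<in>{1..n}. if i \<in> A then f i else 1)"
    by (rule prod.inter_restrict) simp
  finally show ?thesis .
qed

lemma fourier_M: "fourier_coeff n p1 mu (conj_fun T0 T1) S = M n"
  unfolding fourier_coeff_def M_def G_def
proof (rule sum.cong[OF refl])
  fix x
  have e1: "(\<Prod>i\<in>T1. of_bool (x i)) = (\<Prod>i\<in>{1..n}. if i \<in> T1 then of_bool (x i) else (1::real))"
    by (rule restrict_prod[OF T1])
  have e2: "(\<Prod>i\<in>T0. 1 - of_bool (x i)) = (\<Prod>i\<in>{1..n}. if i \<in> T0 then 1 - of_bool (x i) else (1::real))"
    by (rule restrict_prod[OF T0])
  have e3: "(\<Prod>i\<in>S. bn_phi p1 mu i x) = (\<Prod>i\<in>{1..n}. if i \<in> S then (of_bool (x i) - cm i (x (i - 1))) / cs i (x (i - 1)) else 1)"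
    unfolding bn_phi_def by (rule restrict_prod[OF S])
  show "chain_prob n p1 mu x * conj_fun T0 T1 x * (\<Prod>i\<in>S. bn_phi p1 mu i x) =
         (\<Prod>i\<in>{1..n}. g i (x (i - 1)) (x i)) * 1"
    unfolding e3 conj_fun_def e1 e2 chain_prob_def g_def
    by (simp add: prod.distrib mult_ac)
qed

abbreviation "TT \<equiv> T0 \<union> T1"
abbreviation "dd \<equiv> card (T0 \<union> T1)"
abbreviation "LL \<equiv> sorted_list_of_set (insert 0 (T0 \<union> T1))"

lemma finT: "finite TT" using T0 T1 finite_subset by blast

lemma zero_notT: "0 \<notin> TT" using T0 T1 by auto

lemma LL_len: "length LL = Suc dd"
  using finT zero_notT by simp

lemma LL_set: "set LL = insert 0 TT"
  by (metis finT finite_insert set_sorted_list_of_set)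

lemma LL_sorted: "sorted_wrt (<) LL"
  using strict_sorted_list_of_set by blast

lemma tseq_less: "i < j \<Longrightarrow> j \<le> dd \<Longrightarrow> tseq TT i < tseq TT j"
  unfolding tseq_def using sorted_wrt_nth_less[OF LL_sorted] LL_len by simp

lemma tseq_le: "i \<le> j \<Longrightarrow> j \<le> dd \<Longrightarrow> tseq TT i \<le> tseq TT j"
  using tseq_less[of i j] by (cases "i = j") auto

lemma tseq_in: "i \<le> dd \<Longrightarrow> tseq TT i \<in> insert 0 TT"
  unfolding tseq_def using LL_len LL_set nth_mem[of i LL] by simp

lemma tseq_elem: "j \<in> insert 0 TT \<Longrightarrow> \<exists>k \<le> dd. tseq TT k = j"
proof -
  assume "j \<in> insert 0 TT"
  then have "j \<in> set LL" using LL_set by simp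
  then obtain k where "k < length LL" "LL ! k = j" by (auto simp: in_set_conv_nth)
  then show ?thesis unfolding tseq_def using LL_len by (intro exI[of _ k]) auto
qed

lemma tseq_0: "tseq TT 0 = 0"
proof -
  obtain k where k: "k \<le> dd" "tseq TT k = 0" using tseq_elem[of 0] by auto
  then show ?thesis using tseq_le[of 0 k] by simp
qed

lemma tseq_inT: "1 \<le> i \<Longrightarrow> i \<le> dd \<Longrightarrow> tseq TT i \<in> TT"
  using tseq_in[of i] tseq_less[of 0 i] tseq_0 by auto

lemma tseq_gap: "1 \<le> i \<Longrightarrow> i \<le> dd \<Longrightarrow> tseq TT (i - 1) < j \<Longrightarrow> j < tseq TT i \<Longrightarrow> j \<notin> TT"
proof
  assume a: "1 \<le> i" "i \<le> dd" "tseq TT (i - 1) < j" "j < tseq TT i" "j \<in> TT"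
  then obtain k where k: "k \<le> dd" "tseq TT k = j" using tseq_elem[of j] by auto
  show False
  proof (cases "k \<le> i - 1")
    case True
    moreover have "i - 1 \<le> dd" using a by simp
    ultimately have "tseq TT k \<le> tseq TT (i - 1)" using tseq_le[of k "i - 1"] by blast
    then show ?thesis using a k by simp
  next
    case False
    then have "i \<le> k" by simp
    then show ?thesis using tseq_le[of i k] a k by simp
  qed
qed

lemma tseq_max: "j \<in> TT \<Longrightarrow> j \<le> tseq TT dd"
  using tseq_elem[of j] tseq_le by fastforce

lemma tseq_n: "i \<le> dd \<Longrightarrow> tseq TT i \<le> n"
  using tseq_in[of i] T0 T1 by auto

lemma blocks:
  "k \<le> dd \<Longrightarrow> M (tseq TT k) = (\<Prod>i\<in>{1..k}.
                  Dp (hseq S TT i + 1) (tseq TT i) * Ap (tseq TT (i - 1) + 1) (hseq S TT i) (yseq TT T1 (i - 1)))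
     \<and> P (tseq TT k) = (if yseq TT T1 k then M (tseq TT k) else 0)"
proof (induction k)
  case 0
  have "0 \<notin> T1" using T1 by auto
  then show ?case by (simp add: tseq_0 M0 P0 yseq_def)
next
  case (Suc k)
  define tp where "tp = tseq TT k"
  define t where "t = tseq TT (Suc k)"
  define h where "h = hseq S TT (Suc k)"
  have IH: "M tp = (\<Prod>i\<in>{1..k}.
                  Dp (hseq S TT i + 1) (tseq TT i) * Ap (tseq TT (i - 1) + 1) (hseq S TT i) (yseq TT T1 (i - 1)))"
       "P tp = (if yseq TT T1 k then M tp else 0)"
    using Suc by (auto simp: tp_def)
  have tp: "tp < t" unfolding tp_def t_def using tseq_less Suc.prems by simp
  have tn: "t \<le> n" unfolding t_def using tseq_n Suc.prems by simp
  have tT: "t \<in> TT" unfolding t_def using tseq_inT Suc.prems by simp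
  have noT: "\<forall>j. tp < j \<and> j < t \<longrightarrow> j \<notin> T0 \<and> j \<notin> T1"
    unfolding tp_def t_def using tseq_gap[of "Suc k"] Suc.prems by auto
  have hh: "(h = t \<and> (\<forall>j. tp < j \<and> j < t \<longrightarrow> j \<notin> S)) \<or> (h \<in> S \<and> tp < h \<and> h < t \<and> (\<forall>j. tp < j \<and> j < h \<longrightarrow> j \<notin> S))"
  proof (cases "S \<inter> {tp<..<t} = {}")
    case True
    then have "h = t" unfolding h_def hseq_def tp_def t_def by simp
    then show ?thesis using True by auto
  next
    case False
    define X where "X = S \<inter> {tp<..<t}"
    have hX: "h = Min X" unfolding h_def hseq_def X_def using False by (simp add: tp_def t_def)
    have fX: "finite X" unfolding X_def by simp
    have mX: "Min X \<in> X" using fX False Min_in X_def by blast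
    have lX: "\<forall>j\<in>X. Min X \<le> j" using fX by simp
    have "\<forall>j. tp < j \<and> j < Min X \<longrightarrow> j \<notin> S"
    proof (intro allI impI)
      fix j assume j: "tp < j \<and> j < Min X"
      show "j \<notin> S"
      proof
        assume "j \<in> S"
        then have "j \<in> X" using j mX unfolding X_def by auto
        then show False using lX j by auto
      qed
    qed
    then show ?thesis using mX unfolding hX X_def by auto
  qed
  have bl: "M t = M tp * (Dp (h + 1) t * Ap (tp + 1) h (yseq TT T1 k)) \<and> P t = (if t \<in> T1 then M t else 0)"
    by (rule block[OF tp tn tT noT IH(2) hh])
  have pr: "(\<Prod>i\<in>{1..Suc k}.
                  Dp (hseq S TT i + 1) (tseq TT i) * Ap (tseq TT (i - 1) + 1) (hseq S TT i) (yseq TT T1 (i - 1)))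
       = (Dp (h + 1) t * Ap (tp + 1) h (yseq TT T1 k)) * (\<Prod>i\<in>{1..k}.
                  Dp (hseq S TT i + 1) (tseq TT i) * Ap (tseq TT (i - 1) + 1) (hseq S TT i) (yseq TT T1 (i - 1)))"
    by (subst prod.nat_ivl_Suc') (simp_all add: h_def t_def tp_def)
  have bl1: "M t = M tp * (Dp (h + 1) t * Ap (tp + 1) h (yseq TT T1 k))" using bl by blast
  have m: "M t = (\<Prod>i\<in>{1..Suc k}.
                  Dp (hseq S TT i + 1) (tseq TT i) * Ap (tseq TT (i - 1) + 1) (hseq S TT i) (yseq TT T1 (i - 1)))"
    unfolding pr bl1 IH(1) by (rule mult.commute)
  have y: "yseq TT T1 (Suc k) = (t \<in> T1)" by (simp add: yseq_def t_def)
  have "M t = (\<Prod>i\<in>{1..Suc k}.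
                  Dp (hseq S TT i + 1) (tseq TT i) * Ap (tseq TT (i - 1) + 1) (hseq S TT i) (yseq TT T1 (i - 1)))
     \<and> P t = (if yseq TT T1 (Suc k) then M t else 0)"
    using m bl y by simp
  then show ?case by (simp only: t_def)
qed

end

theorem mainTheorem5:
  fixes n :: nat and p1 :: real and mu :: "nat \<Rightarrow> bool \<Rightarrow> real"
    and S T0 T1 :: "nat set"
  assumes p1: "0 < p1" "p1 < 1"
    and mu: "\<And>i b. i \<in> {2..n} \<Longrightarrow> 0 < mu i b \<and> mu i b < 1"
    and T0: "T0 \<subseteq> {1..n}" and T1: "T1 \<subseteq> {1..n}" and disj: "T0 \<inter> T1 = {}"
    and d: "card (T0 \<union> T1) \<ge> 1"
    and S: "S \<subseteq> {1..n}"
  shows "(S \<noteq> {} \<and> Max S > tseq (T0 \<union> T1) (card (T0 \<union> T1))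
            \<longrightarrow> fourier_coeff n p1 mu (conj_fun T0 T1) S = 0)
       \<and> (\<not> (S \<noteq> {} \<and> Max S > tseq (T0 \<union> T1) (card (T0 \<union> T1)))
            \<longrightarrow> fourier_coeff n p1 mu (conj_fun T0 T1) S =
               (\<Prod>i\<in>{1..card (T0 \<union> T1)}.
                  Dprime p1 mu S T0 T1 (hseq S (T0 \<union> T1) i + 1) (tseq (T0 \<union> T1) i)
                  * Aprime p1 mu S T0 T1 (tseq (T0 \<union> T1) (i - 1) + 1) (hseq S (T0 \<union> T1) i)
                      (yseq (T0 \<union> T1) T1 (i - 1))))"
proof -
  interpret chainbn n p1 mu S T0 T1
    using assms by unfold_locales auto
  have F: "fourier_coeff n p1 mu (conj_fun T0 T1) S = M n" by (rule fourier_M)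
  have B: "M (tseq TT dd) = (\<Prod>i\<in>{1..dd}.
                  Dprime p1 mu S T0 T1 (hseq S TT i + 1) (tseq TT i)
                  * Aprime p1 mu S T0 T1 (tseq TT (i - 1) + 1) (hseq S TT i) (yseq TT T1 (i - 1)))"
    using blocks[of dd] by simp
  have finS: "finite S" using assms(8) finite_subset by blast
  have tdn: "tseq TT dd \<le> n" by (rule tseq_n) simp
  show ?thesis
  proof (intro conjI impI)
    assume a: "S \<noteq> {} \<and> Max S > tseq TT dd"
    define s where "s = Max S"
    have sS: "s \<in> S" unfolding s_def using a finS Max_in by blast
    have s1: "s \<in> {1..n}" using sS assms(8) by auto
    have sT: "s \<notin> T0" "s \<notin> T1" using tseq_max[of s] a s_def by auto
    have Ms: "M s = 0" using step_S[OF s1 sT sS] by simp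
    have "\<forall>j. s < j \<and> j \<le> n \<longrightarrow> j \<notin> T0 \<and> j \<notin> T1"
      using tseq_max a s_def by force
    then have "M n = 0" using seg_zero[of s n] Ms s1 by auto
    then show "fourier_coeff n p1 mu (conj_fun T0 T1) S = 0" using F by simp
  next
    assume a: "\<not> (S \<noteq> {} \<and> Max S > tseq TT dd)"
    have "\<forall>j\<in>S. j \<le> tseq TT dd"
    proof
      fix j assume "j \<in> S"
      then have "S \<noteq> {}" "j \<le> Max S" using Max_ge[OF finS, of j] by auto
      then show "j \<le> tseq TT dd" using a by linarith
    qed
    then have "\<forall>j. tseq TT dd < j \<and> j \<le> n \<longrightarrow> j \<notin> T0 \<and> j \<notin> T1 \<and> j \<notin> S"
      using tseq_max by force
    then have "M n = M (tseq TT dd)" using seg_keep[of "tseq TT dd" n] tdn by auto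
    then show "fourier_coeff n p1 mu (conj_fun T0 T1) S = (\<Prod>i\<in>{1..dd}.
                  Dprime p1 mu S T0 T1 (hseq S TT i + 1) (tseq TT i)
                  * Aprime p1 mu S T0 T1 (tseq TT (i - 1) + 1) (hseq S TT i) (yseq TT T1 (i - 1)))"
      using F B by simp
  qed
qed

end
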